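(* Consider the model described in the context with fixed $N_\text{c}$ and $s$, and let the data rate $r$ vary over $(\lambda L,\infty)$; as $r$ decreases to $\lambda L$ the mean delay $\mathbb{E}\{D\}$ increases to $\infty$. Let $P_\text{o} = N_\text{c} P_\text{Bm} + \Delta_{P_\text{B}} c_0 s^{\beta-1} + P_\text{RF}$ and $P_\text{s} = P_\text{o} - P_\text{sleep} - 2\lambda E_\text{sw}$, and let $\Omega$ denote the principal branch of the Lambert W function. Then: (1) If \[ \lambda < \frac{P_\text{o} - P_\text{sleep}}{2E_\text{sw}} \quad\text{and}\quad L < \frac{W}{\lambda \ln 2}\left[\Omega\!\left(\frac{g\eta P_\text{s} - 1}{\mathrm{e}}\right) + 1\right], \] then there exists a unique rate $r_\text{e}^* \in (\lambda L,\infty)$ minimizing the average power consumption $\mathbb{E}\{P\}$, given by \[ r_\text{e}^* = \frac{W}{\ln 2}\left[\Omega\!\left(\frac{g\eta P_\text{s} - 1}{\mathrm{e}}\right) + 1\right]. \] (2) If this condition is not satisfied, then the average power consumption $\mathbb{E}\{P\}$ is monotonically decreasing in the average delay $\mathbb{E}\{D\}$ (equivalently, increasing in $r$ on $(\lambda L,\infty)$). (3) In both cases, as the average delay tends to infinity (i.e. $r \downarrow \lambda L$), the average power consumption tends to \[ P_\text{o} + \kappa \Delta_{P_\text{B}} s^{\beta-1}\lambda L + \frac{2^{\lambda L/W} - 1}{g\eta}. \]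
   Context: A virtual base station (VBS) is modeled as an M/G/1 processor-sharing queue: flows arrive at rate $\lambda>0$, each with mean size $L>0$, and are served at total rate $r$ (bits/s) whenever the queue is nonempty; $r > \lambda L$, and the load is $\rho = \lambda L / r$. The mean queue length is $\mathbb{E}\{n\} = \lambda L/(r-\lambda L)$ and the mean delay is $\mathbb{E}\{D\} = \mathbb{E}\{n\}/\lambda = L/(r-\lambda L)$. The transmit power $P_\text{out}$ needed for rate $r$ is given by $r = W\log_2(1 + g P_\text{out})$, i.e. $P_\text{out} = (2^{r/W}-1)/g$, where $W>0$ is the bandwidth and $g>0$ the channel gain. When busy the VBS consumes $P_\text{B} + P_\text{R}$ with RRH power $P_\text{R} = P_\text{out}/\eta + P_\text{RF}$ ($\eta\in(0,1]$ the power amplifier efficiency, $P_\text{RF}\ge 0$) and BBU power $P_\text{B} = N_\text{c} P_\text{Bm} + \Delta_{P_\text{B}} c_0 s^{\beta-1} + \Delta_{P_\text{B}}\kappa r s^{\beta-1}$, where $N_\text{c}$ is the number of active CPU cores, $s>0$ the CPU speed, $P_\text{Bm}$ the minimum per-core power, $\Delta_{P_\text{B}} = (P_\text{BM}-P_\text{Bm})/s_0^\beta \ge 0$ with $P_\text{BM}$ the maximum per-core power and $s_0$ a reference speed, and $c_0,\kappa,\beta$ are nonnegative constants. When the queue is empty the VBS sleeps with power $P_\text{sleep}$, and each on/off switch costs energy $E_\text{sw} > 0$. With $\mathbb{E}\{T_\text{c}\} = 1/(\lambda(1-\rho))$ the mean length of a busy-plus-idle cycle, the average power is $\mathbb{E}\{P\}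 = \rho (P_\text{B} + P_\text{R}) + (1-\rho) P_\text{sleep} + 2E_\text{sw}/\mathbb{E}\{T_\text{c}\}$. *)

theory Defs
  imports Complex_Main
begin

text \<open>Principal branch of the Lambert W function: for x \<ge> -1/e, the unique
  w \<ge> -1 with w * exp w = x.\<close>
definition lambertW0 :: "real \<Rightarrow> real" where
  "lambertW0 x = (THE w. w \<ge> -1 \<and> w * exp w = x)"

definition P_out :: "real \<Rightarrow> real \<Rightarrow> real \<Rightarrow> real" where
  "P_out W g r = (2 powr (r / W) - 1) / g"

definition P_RRH :: "real \<Rightarrow> real \<Rightarrow> real \<Rightarrow> real \<Rightarrow> real \<Rightarrow> real" where
  "P_RRH W g \<eta> P_RF r = P_out W g r / \<eta> + P_RF"

definition Delta_PB :: "real \<Rightarrow> real \<Rightarrow> real \<Rightarrow> real \<Rightarrow> real" where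
  "Delta_PB P_BM P_Bm s0 \<beta> = (P_BM - P_Bm) / (s0 powr \<beta>)"

definition P_BBU :: "nat \<Rightarrow> real \<Rightarrow> real \<Rightarrow> real \<Rightarrow> real \<Rightarrow> real \<Rightarrow> real \<Rightarrow> real \<Rightarrow> real" where
  "P_BBU Nc P_Bm \<Delta> c0 \<kappa> s \<beta> r =
     real Nc * P_Bm + \<Delta> * c0 * s powr (\<beta> - 1) + \<Delta> * \<kappa> * r * s powr (\<beta> - 1)"

definition mean_delay :: "real \<Rightarrow> real \<Rightarrow> real \<Rightarrow> real" where
  "mean_delay lam L r = L / (r - lam * L)"

definition avg_power ::
  "real \<Rightarrow> real \<Rightarrow> real \<Rightarrow> real \<Rightarrow> real \<Rightarrow> real \<Rightarrow> nat \<Rightarrow> real \<Rightarrow> real \<Rightarrow> real \<Rightarrow> real \<Rightarrow> real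
   \<Rightarrow> real \<Rightarrow> real \<Rightarrow> real \<Rightarrow> real \<Rightarrow> real" where
  "avg_power lam L W g \<eta> P_RF Nc P_Bm \<Delta> c0 \<kappa> s \<beta> P_sleep E_sw r =
     (let \<rho> = lam * L / r; ETc = 1 / (lam * (1 - \<rho>)) in
      \<rho> * (P_BBU Nc P_Bm \<Delta> c0 \<kappa> s \<beta> r + P_RRH W g \<eta> P_RF r)
      + (1 - \<rho>) * P_sleep + 2 * E_sw / ETc)"

end

theory Submission imports Defs begin

definition qf :: "real \<Rightarrow> real" where "qf x = exp x * (x - 1)"

lemma qf_mono: assumes "0 \<le> x1" "x1 < x2" shows "qf x1 < qf x2"
proof -
  have d: "\<And>x. DERIV qf x :> x * exp x"
    unfolding qf_def by (auto intro!: derivative_eq_intros simp: algebra_simps)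
  obtain z where z: "x1 < z" "z < x2" "qf x2 - qf x1 = (x2 - x1) * (z * exp z)"
    using MVT2[OF assms(2) d] by blast
  have "(x2 - x1) * (z * exp z) > 0" using z assms by simp
  thus ?thesis using z by simp
qed

lemma qf_0: "qf 0 = -1" by (simp add: qf_def)

lemma lambert: assumes "a > -1"
  shows "lambertW0 (a / exp 1) + 1 > 0 \<and> qf (lambertW0 (a / exp 1) + 1) = a"
proof -
  have eq: "\<And>w. (w * exp w = a / exp 1) \<longleftrightarrow> qf (w + 1) = a"
    by (simp add: qf_def exp_add field_simps)
  have c: "\<And>x. isCont qf x" unfolding qf_def by (intro continuous_intros)
  have "qf (a + 2) \<ge> a + 1"
  proof -
    have "exp (a+2) \<ge> 1" using assms by simp
    hence "exp (a+2) * (a+1) \<ge> 1 * (a+1)" using assms by (intro mult_right_mono) auto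
    thus ?thesis by (simp add: qf_def add.commute)
  qed
  then obtain x where x: "0 \<le> x" "x \<le> a + 2" "qf x = a"
    using IVT[of qf 0 a "a+2"] c qf_0 assms by force
  have ex: "x - 1 \<ge> -1 \<and> (x - 1) * exp (x - 1) = a / exp 1" using x eq[of "x-1"] by simp
  have un: "\<And>w. w \<ge> -1 \<and> w * exp w = a / exp 1 \<Longrightarrow> w = x - 1"
  proof -
    fix w assume w: "w \<ge> -1 \<and> w * exp w = a / exp 1"
    hence qw: "qf (w+1) = a" using eq by blast
    show "w = x - 1"
    proof (rule ccontr)
      assume "w \<noteq> x - 1"
      hence "w + 1 < x \<or> x < w + 1" by linarith
      thus False using qf_mono[of "w+1" x] qf_mono[of x "w+1"] qw x w by auto
    qed
  qed
  have "lambertW0 (a / exp 1) = x - 1"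
    unfolding lambertW0_def using ex un by (intro the_equality) auto
  moreover have "x \<noteq> 0" using x qf_0 assms by auto
  ultimately show ?thesis using x by simp
qed

lemma h_deriv: assumes "r > 0"
  shows "((\<lambda>r. (a + exp (c*r)) / r) has_real_derivative (qf (c*r) - a) / r^2) (at r)"
proof -
  have "((\<lambda>r. (a + exp (c*r)) / r) has_real_derivative
     ((c * exp (c*r)) * r - (a + exp (c*r)) * 1) / (r * r)) (at r)"
    using assms by (auto intro!: derivative_eq_intros)
  moreover have "((c * exp (c*r)) * r - (a + exp (c*r)) * 1) / (r * r) = (qf (c*r) - a) / r^2"
    by (simp add: qf_def power2_eq_square algebra_simps)
  ultimately show ?thesis by simp
qed

lemma EP_formula:
  assumes "r \<noteq> 0" "g \<noteq> 0" "\<eta> \<noteq> 0" "W \<noteq> 0"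
  shows "avg_power lam L W g \<eta> P_RF Nc P_Bm \<Delta> c0 \<kappa> s \<beta> P_sleep E_sw r =
    (P_sleep + 2 * lam * E_sw + \<kappa> * \<Delta> * s powr (\<beta> - 1) * lam * L)
    + (lam * L / (g * \<eta>)) * ((g * \<eta> * ((real Nc * P_Bm + \<Delta> * c0 * s powr (\<beta> - 1) + P_RF) - P_sleep - 2 * lam * E_sw) - 1
        + exp (ln 2 / W * r)) / r)"
proof -
  have p: "2 powr (r / W) = exp (ln 2 / W * r)" by (simp add: powr_def)
  have d: "\<And>x. 2 * E_sw / (1 / x) = 2 * E_sw * x" by simp
  show ?thesis
    unfolding avg_power_def Let_def P_BBU_def P_RRH_def P_out_def p d
    using assms by (simp add: field_simps)
qed

theorem proposition1:
  fixes lam L W g \<eta> P_RF P_Bm P_BM s0 c0 \<kappa> s \<beta> P_sleep E_sw :: real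
    and Nc :: nat
    and \<Delta> P_o P_s r_e :: real and EP :: "real \<Rightarrow> real"
  assumes "lam > 0" and "L > 0" and "W > 0" and "g > 0"
    and "0 < \<eta>" and "\<eta> \<le> 1" and "P_RF \<ge> 0"
    and "s > 0" and "s0 > 0" and "P_BM \<ge> P_Bm"
    and "c0 \<ge> 0" and "\<kappa> \<ge> 0" and "\<beta> \<ge> 0" and "E_sw > 0"
    and Delta_def: "\<Delta> = Delta_PB P_BM P_Bm s0 \<beta>"
    and EP_def: "EP = avg_power lam L W g \<eta> P_RF Nc P_Bm \<Delta> c0 \<kappa> s \<beta> P_sleep E_sw"
    and P_o_def: "P_o = real Nc * P_Bm + \<Delta> * c0 * s powr (\<beta> - 1) + P_RF"
    and P_s_def: "P_s = P_o - P_sleep - 2 * lam * E_sw"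
    and r_e_def: "r_e = W / ln 2 * (lambertW0 ((g * \<eta> * P_s - 1) / exp 1) + 1)"
  shows
    "(((lam < (P_o - P_sleep) / (2 * E_sw) \<and> L < r_e / lam) \<longrightarrow>
        r_e \<in> {lam * L<..} \<and>
        (\<forall>r\<in>{lam * L<..}. EP r_e \<le> EP r) \<and>
        (\<forall>r\<in>{lam * L<..}. (\<forall>r'\<in>{lam * L<..}. EP r \<le> EP r') \<longrightarrow> r = r_e))
     \<and>
     (\<not> (lam < (P_o - P_sleep) / (2 * E_sw) \<and> L < r_e / lam) \<longrightarrow>
        (\<forall>r1\<in>{lam * L<..}. \<forall>r2\<in>{lam * L<..}.
           mean_delay lam L r1 < mean_delay lam L r2 \<longrightarrow> EP r1 > EP r2))
     \<and>
     (EP \<longlongrightarrow> P_o + \<kappa> * \<Delta> * s powr (\<beta> - 1) * lam * L + (2 powr (lam * L / W) - 1) / (g * \<eta>))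
        (at_right (lam * L)))"
proof -
  define C where "C = P_sleep + 2 * lam * E_sw + \<kappa> * \<Delta> * s powr (\<beta> - 1) * lam * L"
  define K where "K = lam * L / (g * \<eta>)"
  define a where "a = g * \<eta> * P_s - 1"
  define c where "c = ln 2 / W"
  define h where "h = (\<lambda>r::real. (a + exp (c*r)) / r)"
  have lL: "lam * L > 0" using assms by simp
  have K: "K > 0" unfolding K_def using assms by simp
  have c: "c > 0" unfolding c_def using assms by simp
  have EPr: "\<And>r. r \<noteq> 0 \<Longrightarrow> EP r = C + K * h r"
    unfolding EP_def C_def K_def h_def a_def c_def P_s_def P_o_def
    using EP_formula assms by simp
  have mvt: "\<And>r1 r2. 0 < r1 \<Longrightarrow> r1 < r2 \<Longrightarrow>
      \<exists>z. r1 < z \<and> z < r2 \<and> h r2 - h r1 = (r2 - r1) * ((qf (c*z) - a) / z^2)"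
  proof -
    fix r1 r2 :: real assume r: "0 < r1" "r1 < r2"
    have "\<And>x. r1 \<le> x \<Longrightarrow> x \<le> r2 \<Longrightarrow> DERIV h x :> (qf (c*x) - a) / x^2"
      unfolding h_def using r by (intro h_deriv) auto
    from MVT2[OF r(2) this] show "\<exists>z. r1 < z \<and> z < r2 \<and> h r2 - h r1 = (r2 - r1) * ((qf (c*z) - a) / z^2)"
      by blast
  qed
  have cond_iff: "(lam < (P_o - P_sleep) / (2 * E_sw) \<and> L < r_e / lam) \<longleftrightarrow> (P_s > 0 \<and> lam * L < r_e)"
  proof -
    have "lam < (P_o - P_sleep) / (2 * E_sw) \<longleftrightarrow> P_s > 0"
      using assms by (simp add: P_s_def field_simps)
    moreover have "L < r_e / lam \<longleftrightarrow> lam * L < r_e" using assms by (simp add: field_simps)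
    ultimately show ?thesis by simp
  qed
  have lam_e: "P_s > 0 \<Longrightarrow> c * r_e > 0 \<and> qf (c * r_e) = a"
  proof -
    assume "P_s > 0"
    hence "a > -1" unfolding a_def using assms by simp
    from lambert[OF this] have "lambertW0 (a / exp 1) + 1 > 0 \<and> qf (lambertW0 (a / exp 1) + 1) = a" .
    moreover have "c * r_e = lambertW0 (a / exp 1) + 1"
      unfolding c_def r_e_def a_def using assms by simp
    ultimately show ?thesis by simp
  qed
  have P1: "(P_s > 0 \<and> lam * L < r_e) \<Longrightarrow> r_e \<in> {lam * L<..} \<and>
        (\<forall>r\<in>{lam * L<..}. EP r_e \<le> EP r) \<and>
        (\<forall>r\<in>{lam * L<..}. (\<forall>r'\<in>{lam * L<..}. EP r \<le> EP r') \<longrightarrow> r = r_e)"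
  proof -
    assume H: "P_s > 0 \<and> lam * L < r_e"
    note e = lam_e[OF conjunct1[OF H]]
    have strict: "\<And>r. lam * L < r \<Longrightarrow> r \<noteq> r_e \<Longrightarrow> EP r_e < EP r"
    proof -
      fix r assume r: "lam * L < r" "r \<noteq> r_e"
      have "h r_e < h r"
      proof (cases "r < r_e")
        case True
        then obtain z where z: "r < z" "z < r_e" "h r_e - h r = (r_e - r) * ((qf (c*z) - a) / z^2)"
          using mvt[of r r_e] r lL by auto
        have "c * z < c * r_e" using z c by simp
        hence "qf (c*z) < a" using qf_mono[of "c*z" "c*r_e"] e c z r lL by simp
        hence "(r_e - r) * ((qf (c*z) - a) / z^2) < 0" using z r lL
          by (intro mult_pos_neg divide_neg_pos) auto
        thus ?thesis using z by simp
      next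
        case False
        hence F: "r_e < r" using r by simp
        then obtain z where z: "r_e < z" "z < r" "h r - h r_e = (r - r_e) * ((qf (c*z) - a) / z^2)"
          using mvt[of r_e r] H lL by auto
        have "c * r_e < c * z" using z c by simp
        hence "qf (c*z) > a" using qf_mono[of "c*r_e" "c*z"] e by simp
        hence "(r - r_e) * ((qf (c*z) - a) / z^2) > 0" using z F H lL
          by (intro mult_pos_pos divide_pos_pos) auto
        thus ?thesis using z by simp
      qed
      moreover have "r \<noteq> 0" "r_e \<noteq> 0" using r H lL by auto
      ultimately show "EP r_e < EP r" using EPr K by simp
    qed
    show ?thesis
    proof (intro conjI ballI impI)
      show "r_e \<in> {lam * L<..}" using H by simp
    next
      fix r assume "r \<in> {lam * L<..}"
      thus "EP r_e \<le> EP r" using strict[of r] by (cases "r = r_e") auto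
    next
      fix r assume r: "r \<in> {lam * L<..}" and all: "\<forall>r'\<in>{lam * L<..}. EP r \<le> EP r'"
      have "EP r \<le> EP r_e" using all H by simp
      thus "r = r_e" using strict[of r] r by force
    qed
  qed
  have P2: "\<not> (P_s > 0 \<and> lam * L < r_e) \<Longrightarrow>
        (\<forall>r1\<in>{lam * L<..}. \<forall>r2\<in>{lam * L<..}.
           mean_delay lam L r1 < mean_delay lam L r2 \<longrightarrow> EP r1 > EP r2)"
  proof (intro ballI impI)
    fix r1 r2 assume H: "\<not> (P_s > 0 \<and> lam * L < r_e)"
      and r1: "r1 \<in> {lam * L<..}" and r2: "r2 \<in> {lam * L<..}"
      and md: "mean_delay lam L r1 < mean_delay lam L r2"
    have pos: "\<And>z. lam * L < z \<Longrightarrow> qf (c * z) > a"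
    proof -
      fix z assume z: "lam * L < z"
      have cz: "c * z > 0" using z lL c by simp
      show "qf (c * z) > a"
      proof (cases "P_s > 0")
        case True
        note e = lam_e[OF True]
        have "r_e \<le> lam * L" using H True by simp
        hence "c * r_e < c * z" using z c by simp
        thus ?thesis using qf_mono[of "c*r_e" "c*z"] e by simp
      next
        case False
        have "a \<le> -1" unfolding a_def using False assms
          by (simp add: mult_nonneg_nonpos)
        thus ?thesis using qf_mono[of 0 "c*z"] cz qf_0 by simp
      qed
    qed
    have "r2 < r1"
    proof -
      have "L / (r1 - lam * L) < L / (r2 - lam * L)" using md by (simp add: mean_delay_def)
      hence "r2 - lam * L < r1 - lam * L" using r1 r2 assms
        by (simp add: divide_less_cancel frac_less2) (smt (verit) divide_left_mono mult_pos_pos)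
      thus ?thesis by simp
    qed
    then obtain z where z: "r2 < z" "z < r1" "h r1 - h r2 = (r1 - r2) * ((qf (c*z) - a) / z^2)"
      using mvt[of r2 r1] r2 lL by auto
    have "(r1 - r2) * ((qf (c*z) - a) / z^2) > 0" using pos[of z] z r2 \<open>r2 < r1\<close> lL
      by (intro mult_pos_pos divide_pos_pos) auto
    hence "h r2 < h r1" using z by simp
    moreover have "r1 \<noteq> 0" "r2 \<noteq> 0" using r1 r2 lL by auto
    ultimately show "EP r1 > EP r2" using EPr K by simp
  qed
  have P3: "(EP \<longlongrightarrow> P_o + \<kappa> * \<Delta> * s powr (\<beta> - 1) * lam * L + (2 powr (lam * L / W) - 1) / (g * \<eta>))
        (at_right (lam * L))"
  proof -
    have lim: "((\<lambda>r. C + K * h r) \<longlongrightarrow> C + K * h (lam * L)) (at_right (lam * L))"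
      unfolding h_def using lL by (intro tendsto_intros) auto
    have ev: "eventually (\<lambda>r. C + K * h r = EP r) (at_right (lam * L))"
      by (rule eventually_at_rightI[where b="lam * L + 1"]) (use EPr lL in auto)
    have val: "C + K * h (lam * L) = P_o + \<kappa> * \<Delta> * s powr (\<beta> - 1) * lam * L + (2 powr (lam * L / W) - 1) / (g * \<eta>)"
    proof -
      have p: "2 powr (lam * L / W) = exp (c * (lam * L))" by (simp add: powr_def c_def)
      show ?thesis unfolding C_def K_def h_def a_def P_s_def p using assms lL
        by (simp add: field_simps)
    qed
    show ?thesis using tendsto_cong[OF ev] lim val by simp
  qed
  show ?thesis using P1 P2 P3 cond_iff by simp
qed

end
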